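(* Let $G$ be a graph on vertex set $\{1,\dots,N\}$ with independence number $\alpha(G)$; let $G_x$ be the set of neighbours of $x$ and $N_x=|G_x|$. In the equality problem defined by $G$, Alice receives $x$ and Bob receives $y$, with the promise that $x=y$ or $x\in G_y$; Bob outputs $z\in\{1,2\}$, and the success metric is $$\mathcal{S}(G)=\frac{1}{\sum_x N_x+N}\sum_{y=1}^N\Big(p(1|x=y,y)+\sum_{x\in G_y}p(2|x,y)\Big).$$ For a classical protocol with encoding $p_e(m|x)$ (messages $m$ from a finite set of arbitrary size) and decoding $p_d(z|y,m)$, so that $p(z|x,y)=\sum_m p_e(m|x)p_d(z|y,m)$, let $\mathcal{S}_C(G)$ be its success metric and $\mathcal{D}_C=\frac1N\sum_m\max_x p_e(m|x)$ its distinguishability. Then every classical protocol satisfies $$\frac{1}{N\alpha(G)}\Big(\big(\textstyle\sum_x N_x+N\big)\big(\mathcal{S}_C(G)-1\big)+N\Big)\le \mathcal{D}_C.$$ *)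

theory Defs
  imports Complex_Main
begin

definition is_graph :: "nat \<Rightarrow> (nat \<Rightarrow> nat \<Rightarrow> bool) \<Rightarrow> bool" where
  "is_graph N E \<longleftrightarrow> (\<forall>x\<in>{1..N}. \<forall>y\<in>{1..N}. E x y \<longleftrightarrow> E y x) \<and> (\<forall>x\<in>{1..N}. \<not> E x x)"

definition nbhd :: "nat \<Rightarrow> (nat \<Rightarrow> nat \<Rightarrow> bool) \<Rightarrow> nat \<Rightarrow> nat set" where
  "nbhd N E x = {y \<in> {1..N}. E x y}"

definition independent_set :: "nat \<Rightarrow> (nat \<Rightarrow> nat \<Rightarrow> bool) \<Rightarrow> nat set \<Rightarrow> bool" where
  "independent_set N E S \<longleftrightarrow> S \<subseteq> {1..N} \<and> (\<forall>x\<in>S. \<forall>y\<in>S. \<not> E x y)"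

definition independence_number :: "nat \<Rightarrow> (nat \<Rightarrow> nat \<Rightarrow> bool) \<Rightarrow> nat" where
  "independence_number N E = Max {card S | S. independent_set N E S}"

(* classical protocol: encoding pe x m = p_e(m|x) over finite message set M,
   decoding pd y m z = p_d(z|y,m), z \<in> {1,2} *)
definition classical_protocol ::
  "nat \<Rightarrow> 'm set \<Rightarrow> (nat \<Rightarrow> 'm \<Rightarrow> real) \<Rightarrow> (nat \<Rightarrow> 'm \<Rightarrow> nat \<Rightarrow> real) \<Rightarrow> bool" where
  "classical_protocol N M pe pd \<longleftrightarrow> finite M \<and>
     (\<forall>x\<in>{1..N}. (\<forall>m\<in>M. pe x m \<ge> 0) \<and> (\<Sum>m\<in>M. pe x m) = 1) \<and>
     (\<forall>y\<in>{1..N}. \<forall>m\<in>M. pd y m 1 \<ge> 0 \<and> pd y m 2 \<ge> 0 \<and> pd y m 1 + pd y m 2 = 1)"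

definition cprob :: "'m set \<Rightarrow> (nat \<Rightarrow> 'm \<Rightarrow> real) \<Rightarrow> (nat \<Rightarrow> 'm \<Rightarrow> nat \<Rightarrow> real) \<Rightarrow> nat \<Rightarrow> nat \<Rightarrow> nat \<Rightarrow> real" where
  "cprob M pe pd z x y = (\<Sum>m\<in>M. pe x m * pd y m z)"

definition success :: "nat \<Rightarrow> (nat \<Rightarrow> nat \<Rightarrow> bool) \<Rightarrow> 'm set \<Rightarrow> (nat \<Rightarrow> 'm \<Rightarrow> real) \<Rightarrow> (nat \<Rightarrow> 'm \<Rightarrow> nat \<Rightarrow> real) \<Rightarrow> real" where
  "success N E M pe pd =
     (1 / (real (\<Sum>x\<in>{1..N}. card (nbhd N E x)) + real N)) *
     (\<Sum>y\<in>{1..N}. cprob M pe pd 1 y y + (\<Sum>x\<in>nbhd N E y. cprob M pe pd 2 x y))"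

definition distinguishability :: "nat \<Rightarrow> 'm set \<Rightarrow> (nat \<Rightarrow> 'm \<Rightarrow> real) \<Rightarrow> real" where
  "distinguishability N M pe = (1 / real N) * (\<Sum>m\<in>M. Max ((\<lambda>x. pe x m) ` {1..N}))"

end

theory Submission
  imports Defs
begin

lemma indep_le_alpha:
  assumes "independent_set N E S"
  shows "card S \<le> independence_number N E"
proof -
  have "{card S | S. independent_set N E S} \<subseteq> card ` Pow {1..N}"
    by (auto simp: independent_set_def)
  then have fin: "finite {card S | S. independent_set N E S}"
    by (meson finite_Pow_iff finite_atLeastAtMost finite_imageI finite_subset)
  show ?thesis unfolding independence_number_def
    using assms by (intro Max_ge[OF fin]) blast
qed

lemma per_m:
  assumes g: "is_graph N E"
    and q: "\<And>x. x \<in> {1..N} \<Longrightarrow> q x \<ge> (0::real)"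
    and d: "\<And>y. y \<in> {1..N} \<Longrightarrow> d y \<ge> 0 \<and> d y \<le> (1::real)"
    and N: "N \<ge> 1"
  shows "(\<Sum>y\<in>{1..N}. d y * (q y - (\<Sum>x\<in>nbhd N E y. q x)))
         \<le> real (independence_number N E) * Max (q ` {1..N})"
proof -
  define f where "f y = q y - (\<Sum>x\<in>nbhd N E y. q x)" for y
  define S where "S = {y\<in>{1..N}. f y > 0}"
  have finS: "finite S" unfolding S_def by auto
  have nb: "nbhd N E y \<subseteq> {1..N}" for y unfolding nbhd_def by auto
  have ge: "q y' \<le> (\<Sum>x\<in>nbhd N E y. q x)" if "y' \<in> nbhd N E y" for y y'
  proof -
    have "(\<Sum>x\<in>{y'}. q x) \<le> (\<Sum>x\<in>nbhd N E y. q x)"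
    proof (rule sum_mono2)
      show "finite (nbhd N E y)" using nb[of y] finite_subset by blast
      show "{y'} \<subseteq> nbhd N E y" using that by simp
      fix b assume "b \<in> nbhd N E y - {y'}"
      then show "0 \<le> q b" using nb[of y] q by blast
    qed
    then show ?thesis by simp
  qed
  have indep: "independent_set N E S"
    unfolding independent_set_def
  proof (intro conjI ballI)
    show "S \<subseteq> {1..N}" unfolding S_def by auto
    fix x y assume xS: "x \<in> S" and yS: "y \<in> S"
    show "\<not> E x y"
    proof
      assume exy: "E x y"
      have xN: "x \<in> {1..N}" and yN: "y \<in> {1..N}" using xS yS S_def by auto
      have eyx: "E y x" using g exy xN yN unfolding is_graph_def by blast
      have "y \<in> nbhd N E x" using exy yN unfolding nbhd_def by auto
      then have "q y \<le> (\<Sum>z\<in>nbhd N E x. q z)" by (rule ge)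
      moreover have "x \<in> nbhd N E y" using eyx xN unfolding nbhd_def by auto
      then have "q x \<le> (\<Sum>z\<in>nbhd N E y. q z)" by (rule ge)
      moreover have "f x > 0" "f y > 0" using xS yS S_def by auto
      ultimately show False unfolding f_def by linarith
    qed
  qed
  have "(\<Sum>y\<in>{1..N}. d y * f y) \<le> (\<Sum>y\<in>{1..N}. if y \<in> S then f y else 0)"
  proof (intro sum_mono)
    fix y assume y: "y \<in> {1..N}"
    show "d y * f y \<le> (if y \<in> S then f y else 0)"
    proof (cases "f y > 0")
      case True
      have "d y * f y \<le> f y" using True d[OF y] mult_left_le_one_le[of "f y" "d y"] by linarith
      then show ?thesis using True y by (simp add: S_def)
    next
      case False
      have "d y * f y \<le> 0" using False d[OF y] mult_nonneg_nonpos[of "d y" "f y"] by linarith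
      then show ?thesis using False y by (simp add: S_def)
    qed
  qed
  also have "\<dots> = (\<Sum>y\<in>S. f y)"
    by (subst sum.inter_filter[symmetric]) (auto simp: S_def intro: sum.cong)
  also have "\<dots> \<le> (\<Sum>y\<in>S. q y)"
  proof (intro sum_mono)
    fix y assume "y \<in> S"
    have "0 \<le> (\<Sum>x\<in>nbhd N E y. q x)"
    proof (rule sum_nonneg)
      fix x assume "x \<in> nbhd N E y"
      then show "0 \<le> q x" using nb[of y] q by blast
    qed
    then show "f y \<le> q y" unfolding f_def by linarith
  qed
  also have "\<dots> \<le> (\<Sum>y\<in>S. Max (q ` {1..N}))"
    by (intro sum_mono Max_ge) (auto simp: S_def)
  also have "\<dots> = real (card S) * Max (q ` {1..N})" by simp
  also have "\<dots> \<le> real (independence_number N E) * Max (q ` {1..N})"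
  proof (intro mult_right_mono)
    show "real (card S) \<le> real (independence_number N E)"
      using indep_le_alpha[OF indep] by simp
    have "1 \<in> {1..N}" using N by simp
    then have "q 1 \<le> Max (q ` {1..N})" by (intro Max_ge) auto
    moreover have "0 \<le> q 1" using q[of 1] N by simp
    ultimately show "0 \<le> Max (q ` {1..N})" by linarith
  qed
  finally show ?thesis unfolding f_def .
qed

theorem theorem3:
  fixes N :: nat and E :: "nat \<Rightarrow> nat \<Rightarrow> bool"
    and M :: "'m set" and pe :: "nat \<Rightarrow> 'm \<Rightarrow> real" and pd :: "nat \<Rightarrow> 'm \<Rightarrow> nat \<Rightarrow> real"
  assumes "is_graph N E"
    and "classical_protocol N M pe pd"
  shows "(1 / (real N * real (independence_number N E))) *
           ((real (\<Sum>x\<in>{1..N}. card (nbhd N E x)) + real N) * (success N E M pe pd - 1) + real N)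
         \<le> distinguishability N M pe"
proof (cases "N = 0")
  case True
  then show ?thesis by (simp add: distinguishability_def)
next
  case False
  then have N: "N \<ge> 1" by simp
  have finM: "finite M" and pe0: "\<And>x m. x \<in> {1..N} \<Longrightarrow> m \<in> M \<Longrightarrow> pe x m \<ge> 0"
    and pe1: "\<And>x. x \<in> {1..N} \<Longrightarrow> (\<Sum>m\<in>M. pe x m) = 1"
    and pd0: "\<And>y m. y \<in> {1..N} \<Longrightarrow> m \<in> M \<Longrightarrow> pd y m 1 \<ge> 0 \<and> pd y m 2 \<ge> 0"
    and pd1: "\<And>y m. y \<in> {1..N} \<Longrightarrow> m \<in> M \<Longrightarrow> pd y m 1 + pd y m 2 = 1"
    using assms(2) unfolding classical_protocol_def by auto
  have nb: "nbhd N E y \<subseteq> {1..N}" for y unfolding nbhd_def by auto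
  define T where "T = real (\<Sum>x\<in>{1..N}. card (nbhd N E x)) + real N"
  have Tpos: "T > 0" unfolding T_def
  proof (rule add_nonneg_pos)
    show "0 \<le> real (\<Sum>x\<in>{1..N}. card (nbhd N E x))" by (rule of_nat_0_le_iff)
    show "0 < real N" using N by simp
  qed
  define c1 where "c1 x y = cprob M pe pd 1 x y" for x y
  have c2: "cprob M pe pd 2 x y = 1 - c1 x y" if "x \<in> {1..N}" "y \<in> {1..N}" for x y
  proof -
    have "cprob M pe pd 2 x y = (\<Sum>m\<in>M. pe x m - pe x m * pd y m 1)"
      unfolding cprob_def
    proof (intro sum.cong refl)
      fix m assume m: "m \<in> M"
      have "pd y m 2 = 1 - pd y m 1" using pd1[OF that(2) m] by linarith
      then show "pe x m * pd y m 2 = pe x m - pe x m * pd y m 1" by (simp add: right_diff_distrib)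
    qed
    also have "\<dots> = 1 - c1 x y"
      unfolding c1_def cprob_def using pe1 that by (simp add: sum_subtractf)
    finally show ?thesis .
  qed
  have "T * success N E M pe pd =
      (\<Sum>y\<in>{1..N}. c1 y y + (\<Sum>x\<in>nbhd N E y. cprob M pe pd 2 x y))"
    unfolding success_def T_def[symmetric] c1_def using Tpos by simp
  also have "\<dots> = (\<Sum>y\<in>{1..N}. real (card (nbhd N E y)) + (c1 y y - (\<Sum>x\<in>nbhd N E y. c1 x y)))"
  proof (intro sum.cong refl)
    fix y assume y: "y \<in> {1..N}"
    have "(\<Sum>x\<in>nbhd N E y. cprob M pe pd 2 x y) = (\<Sum>x\<in>nbhd N E y. 1 - c1 x y)"
      using nb[of y] y by (intro sum.cong refl c2) auto
    then show "c1 y y + (\<Sum>x\<in>nbhd N E y. cprob M pe pd 2 x y) =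
        real (card (nbhd N E y)) + (c1 y y - (\<Sum>x\<in>nbhd N E y. c1 x y))"
      by (simp add: sum_subtractf)
  qed
  also have "\<dots> = T - real N + (\<Sum>y\<in>{1..N}. c1 y y - (\<Sum>x\<in>nbhd N E y. c1 x y))"
    unfolding T_def by (simp add: sum.distrib)
  finally have eq1: "T * (success N E M pe pd - 1) + real N =
      (\<Sum>y\<in>{1..N}. c1 y y - (\<Sum>x\<in>nbhd N E y. c1 x y))"
    by (simp add: algebra_simps)
  also have "\<dots> = (\<Sum>y\<in>{1..N}. \<Sum>m\<in>M. pd y m 1 * (pe y m - (\<Sum>x\<in>nbhd N E y. pe x m)))"
  proof (intro sum.cong refl)
    fix y
    have sw: "(\<Sum>x\<in>nbhd N E y. \<Sum>m\<in>M. pe x m * pd y m 1) = (\<Sum>m\<in>M. \<Sum>x\<in>nbhd N E y. pe x m * pd y m 1)"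
      by (rule sum.swap)
    show "c1 y y - (\<Sum>x\<in>nbhd N E y. c1 x y) = (\<Sum>m\<in>M. pd y m 1 * (pe y m - (\<Sum>x\<in>nbhd N E y. pe x m)))"
      unfolding c1_def cprob_def sw
      by (simp add: sum_subtractf[symmetric] sum_distrib_left sum_distrib_right right_diff_distrib mult.commute)
  qed
  also have "\<dots> = (\<Sum>m\<in>M. \<Sum>y\<in>{1..N}. pd y m 1 * (pe y m - (\<Sum>x\<in>nbhd N E y. pe x m)))"
    by (rule sum.swap)
  also have "\<dots> \<le> (\<Sum>m\<in>M. real (independence_number N E) * Max ((\<lambda>x. pe x m) ` {1..N}))"
  proof (intro sum_mono per_m[OF assms(1) _ _ N])
    fix m x y assume m: "m \<in> M"
    show "x \<in> {1..N} \<Longrightarrow> 0 \<le> pe x m" using pe0 m by auto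
    show "y \<in> {1..N} \<Longrightarrow> 0 \<le> pd y m 1 \<and> pd y m 1 \<le> 1"
    proof -
      assume y: "y \<in> {1..N}"
      have a: "0 \<le> pd y m 1" "0 \<le> pd y m 2" using pd0[OF y m] by auto
      have b: "pd y m 1 + pd y m 2 = 1" using pd1[OF y m] .
      show ?thesis using a b by linarith
    qed
  qed
  also have "\<dots> = real (independence_number N E) * (\<Sum>m\<in>M. Max ((\<lambda>x. pe x m) ` {1..N}))"
    by (simp add: sum_distrib_left)
  finally have key: "T * (success N E M pe pd - 1) + real N \<le>
     real (independence_number N E) * (\<Sum>m\<in>M. Max ((\<lambda>x. pe x m) ` {1..N}))" .
  have Mx0: "0 \<le> (\<Sum>m\<in>M. Max ((\<lambda>x. pe x m) ` {1..N}))"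
  proof (intro sum_nonneg)
    fix m assume m: "m \<in> M"
    have "pe 1 m \<le> Max ((\<lambda>x. pe x m) ` {1..N})" using N by (intro Max_ge) auto
    moreover have "0 \<le> pe 1 m" using pe0[of 1 m] m N by simp
    ultimately show "0 \<le> Max ((\<lambda>x. pe x m) ` {1..N})" by linarith
  qed
  show ?thesis
  proof (cases "independence_number N E = 0")
    case True
    then show ?thesis using Mx0 N by (simp add: distinguishability_def)
  next
    case False
    then have ap: "real (independence_number N E) > 0" by simp
    have "(1 / (real N * real (independence_number N E))) * (T * (success N E M pe pd - 1) + real N)
        \<le> (1 / (real N * real (independence_number N E))) *
          (real (independence_number N E) * (\<Sum>m\<in>M. Max ((\<lambda>x. pe x m) ` {1..N})))"
      using key ap N by (intro mult_left_mono) auto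
    also have "\<dots> = distinguishability N M pe"
      unfolding distinguishability_def using ap by simp
    finally show ?thesis unfolding T_def .
  qed
qed

end
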